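(* Let $s\in(0,1]$, $r=1-s$, and let $\{a_n\}_{n\in\mathbb Z}$ be i.i.d. geometric random variables on $\{1,2,\dots\}$ with $\mathbb P[a_0>i]=r^i$ for $i\ge 0$. Let $N_n=\#\{m\in\mathbb Z: m<n,\ m+a_m>n\}+1$ (the stationary population process), and let $G(z)=\mathbb E[z^{N_0}]$, $z\in[0,1]$, be the probability generating function of $N_0$. Then $$G(z)=z\,G(rz+s)\qquad\text{for all } z\in[0,1].$$ *)

theory Defs
  imports "HOL-Probability.Probability"
begin

definition pop0 :: "(int \<Rightarrow> 'a \<Rightarrow> nat) \<Rightarrow> 'a \<Rightarrow> nat" where
  "pop0 a \<omega> = card {m::int. m < 0 \<and> m + int (a m \<omega>) > 0} + 1"

definition pgf :: "'a measure \<Rightarrow> ('a \<Rightarrow> nat) \<Rightarrow> real \<Rightarrow> real" where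
  "pgf M X z = (\<integral>\<omega>. z ^ X \<omega> \<partial>M)"

end

theory Submission
  imports Defs
begin

locale popset = prob_space M for M :: "'a measure" +
  fixes a :: "int \<Rightarrow> 'a \<Rightarrow> nat" and s r :: real
  assumes s_pos: "0 < s" and s_le: "s \<le> 1" and r_def: "r = 1 - s"
    and ind: "indep_vars (\<lambda>_. count_space UNIV) a UNIV"
    and dist: "\<And>n i. prob {\<omega> \<in> space M. a n \<omega> > i} = r ^ i"
begin

lemma meas_a[measurable]: "a m \<in> measurable M (count_space UNIV)"
  using ind unfolding indep_vars_def by auto

lemma pred_Q[measurable]: "Measurable.pred M (\<lambda>\<omega>. 0 < m + int (a m \<omega>))"
  by (rule measurable_compose[OF meas_a]) simp

lemma r_ge: "0 \<le> r" and r_lt: "r < 1"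
  using s_pos s_le r_def by auto

lemma prob_Q: "m < 0 \<Longrightarrow> prob {\<omega> \<in> space M. 0 < m + int (a m \<omega>)} = r ^ nat (-m)"
proof -
  assume "m < 0"
  then have "{\<omega> \<in> space M. 0 < m + int (a m \<omega>)} = {\<omega> \<in> space M. a m \<omega> > nat (-m)}"
    by auto
  then show ?thesis using dist by simp
qed

definition good :: "nat \<Rightarrow> 'a \<Rightarrow> bool" where
  "good n \<omega> = (\<forall>m. m < - int n \<longrightarrow> \<not> 0 < m + int (a m \<omega>))"

definition PP :: "nat \<Rightarrow> 'a \<Rightarrow> real \<Rightarrow> real" where
  "PP n \<omega> z = (\<Prod>m\<in>{- int n..-1}. if 0 < m + int (a m \<omega>) then z else 1)"

lemma prod_if_pow: "finite A \<Longrightarrow> (\<Prod>m\<in>A. if P m then z else 1) = (z::real) ^ card {m\<in>A. P m}"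
  by (simp add: prod.If_cases Int_def)

lemma good_pop: "good n \<omega> \<Longrightarrow> z ^ pop0 a \<omega> = z * PP n \<omega> z"
proof -
  assume g: "good n \<omega>"
  have "{m::int. m < 0 \<and> m + int (a m \<omega>) > 0} = {m\<in>{- int n..-1}. 0 < m + int (a m \<omega>)}"
    using g unfolding good_def by force
  then show ?thesis unfolding pop0_def PP_def by (subst prod_if_pow) auto
qed

lemma good_mono: "good n \<omega> \<Longrightarrow> n \<le> k \<Longrightarrow> good k \<omega>"
  unfolding good_def by auto

lemma notgood_pop: "\<forall>n. \<not> good n \<omega> \<Longrightarrow> pop0 a \<omega> = 1"
proof -
  assume ng: "\<forall>n. \<not> good n \<omega>"
  let ?T = "{m::int. m < 0 \<and> m + int (a m \<omega>) > 0}"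
  have "infinite ?T"
  proof
    assume f: "finite ?T"
    define B where "B = Min (insert 0 ?T)"
    have B: "\<forall>m\<in>?T. B \<le> m" using f unfolding B_def by auto
    have B0: "B \<le> 0" using f unfolding B_def by auto
    from ng have "\<not> good (nat (- B)) \<omega>" by blast
    then obtain m where "m < - int (nat (-B))" "0 < m + int (a m \<omega>)"
      unfolding good_def by auto
    moreover then have "m \<in> ?T" using B0 by auto
    ultimately show False using B B0 by force
  qed
  then show ?thesis unfolding pop0_def by simp
qed

lemma pred_good[measurable]: "Measurable.pred M (good n)"
  unfolding good_def by measurable

lemma meas_PP[measurable]: "(\<lambda>\<omega>. PP n \<omega> z) \<in> borel_measurable M"
  unfolding PP_def by measurable

lemma meas_pop[measurable]: "(\<lambda>\<omega>. (z::real) ^ pop0 a \<omega>) \<in> borel_measurable M"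
proof (rule borel_measurable_LIMSEQ_metric[where f="\<lambda>n \<omega>. if good n \<omega> then z * PP n \<omega> z else z"])
  fix i show "(\<lambda>\<omega>. if good i \<omega> then z * PP i \<omega> z else z) \<in> borel_measurable M" by measurable
next
  fix \<omega> assume "\<omega> \<in> space M"
  show "(\<lambda>i. if good i \<omega> then z * PP i \<omega> z else z) \<longlonglongrightarrow> z ^ pop0 a \<omega>"
  proof (cases "\<exists>n. good n \<omega>")
    case True
    then obtain n where n: "good n \<omega>" by blast
    show ?thesis
    proof (rule tendsto_eventually)
      show "\<forall>\<^sub>F i in sequentially. (if good i \<omega> then z * PP i \<omega> z else z) = z ^ pop0 a \<omega>"
        unfolding eventually_sequentially
        using n good_mono good_pop by (metis (full_types))
    qed
  next
    case False
    then show ?thesis using notgood_pop[of \<omega>] by simp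
  qed
qed

lemma pop_bound: "(z::real) \<in> {0..1} \<Longrightarrow> norm (z ^ pop0 a \<omega>) \<le> 1"
  by (simp add: power_le_one)

lemma PP_bound: "(z::real) \<in> {0..1} \<Longrightarrow> 0 \<le> PP n \<omega> z \<and> PP n \<omega> z \<le> 1"
  unfolding PP_def by (auto intro!: prod_nonneg prod_le_1)

lemma int_pop: "(z::real) \<in> {0..1} \<Longrightarrow> integrable M (\<lambda>\<omega>. z ^ pop0 a \<omega>)"
  by (rule integrable_const_bound[where B=1]) (auto intro!: AE_I2 power_le_one)

lemma int_PP: "(z::real) \<in> {0..1} \<Longrightarrow> integrable M (\<lambda>\<omega>. z * PP n \<omega> z)"
  by (rule integrable_const_bound[where B=1]) (use PP_bound[of z n] in \<open>auto simp: abs_mult intro!: mult_le_one\<close>)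

definition Q :: "nat \<Rightarrow> real \<Rightarrow> real" where
  "Q n z = (\<Prod>k=1..n. 1 - r ^ k * (1 - z))"

lemma E_PP: "expectation (\<lambda>\<omega>. PP n \<omega> z) = Q n z"
proof -
  let ?X = "\<lambda>m \<omega>. if 0 < m + int (a m \<omega>) then z else 1"
  have iv: "indep_vars (\<lambda>_. borel) (\<lambda>m \<omega>. (\<lambda>k. if 0 < m + int k then z else 1) (a m \<omega>)) {- int n..-1}"
    by (rule indep_vars_compose2[OF indep_vars_subset[OF ind]]) auto
  have ie: "expectation (?X m) = 1 - r ^ nat (-m) * (1 - z)" if "m \<in> {- int n..-1}" for m
  proof -
    let ?E = "{\<omega> \<in> space M. 0 < m + int (a m \<omega>)}"
    have E: "?E \<in> events" by measurable
    have Ei: "integrable M (indicator ?E :: 'a \<Rightarrow> real)"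
      by (intro integrable_real_indicator E) (simp add: less_top[symmetric] emeasure_finite)
    have "expectation (?X m) = expectation (\<lambda>\<omega>. 1 + (z - 1) * indicator ?E \<omega>)"
      by (rule Bochner_Integration.integral_cong[OF refl]) (auto simp: indicator_def)
    also have "\<dots> = 1 + (z - 1) * prob ?E"
      using E Ei by (subst Bochner_Integration.integral_add) (auto simp: prob_space)
    also have "\<dots> = 1 - r ^ nat (-m) * (1 - z)"
      using prob_Q[of m] that by (simp add: algebra_simps)
    finally show ?thesis .
  qed
  have "expectation (\<lambda>\<omega>. PP n \<omega> z) = (\<Prod>m\<in>{- int n..-1}. expectation (?X m))"
    unfolding PP_def
    by (rule indep_vars_lebesgue_integral) (use iv in \<open>auto intro!: integrable_const_bound[where B="max 1 \<bar>z\<bar>"]\<close>)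
  also have "\<dots> = (\<Prod>m\<in>{- int n..-1}. 1 - r ^ nat (-m) * (1 - z))"
    by (rule prod.cong) (auto simp: ie)
  also have "\<dots> = Q n z"
    unfolding Q_def
    by (rule prod.reindex_bij_witness[where i="\<lambda>k. - int k" and j="\<lambda>m. nat (-m)"]) auto
  finally show ?thesis .
qed

lemma bad_prob: "prob {\<omega> \<in> space M. \<not> good n \<omega>} \<le> r ^ Suc n / s"
proof -
  define A where "A k = {\<omega> \<in> space M. 0 < (- (int n + 1 + int k)) + int (a (- (int n + 1 + int k)) \<omega>)}" for k
  have AS: "range A \<subseteq> events" unfolding A_def by auto
  have pA: "prob (A k) = r ^ Suc n * r ^ k" for k
  proof -
    have "prob (A k) = r ^ nat (-(- (int n + 1 + int k)))" unfolding A_def by (rule prob_Q) simp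
    also have "nat (-(- (int n + 1 + int k))) = Suc n + k" by simp
    finally show ?thesis by (simp add: power_add)
  qed
  have sg: "summable (\<lambda>k. r ^ Suc n * r ^ k)"
    using r_ge r_lt by (intro summable_mult summable_geometric) auto
  have eq: "{\<omega> \<in> space M. \<not> good n \<omega>} = (\<Union>k. A k)"
  proof safe
    fix \<omega> assume "\<omega> \<in> space M" "\<not> good n \<omega>"
    then obtain m where m: "m < - int n" "0 < m + int (a m \<omega>)" unfolding good_def by auto
    define k where "k = nat (- m - int n - 1)"
    have "m = - (int n + 1 + int k)" using m unfolding k_def by simp
    then show "\<omega> \<in> (\<Union>k. A k)" using m \<open>\<omega> \<in> space M\<close> unfolding A_def by auto
  next
    fix \<omega> k assume "\<omega> \<in> A k"
    then show "\<omega> \<in> space M" unfolding A_def by auto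
    assume "good n \<omega>"
    then show False using \<open>\<omega> \<in> A k\<close> unfolding good_def A_def by auto
  qed
  have "prob {\<omega> \<in> space M. \<not> good n \<omega>} \<le> (\<Sum>k. prob (A k))"
    unfolding eq by (rule finite_measure_subadditive_countably[OF AS]) (use sg pA in simp)
  also have "\<dots> = (\<Sum>k. r ^ Suc n * r ^ k)" by (simp add: pA)
  also have "\<dots> = r ^ Suc n * (1 / (1 - r))"
    using r_ge r_lt by (subst suminf_mult) (auto simp: suminf_geometric)
  also have "\<dots> = r ^ Suc n / s" using r_def by simp
  finally show ?thesis .
qed

lemma approx:
  assumes z: "(z::real) \<in> {0..1}"
  shows "\<bar>expectation (\<lambda>\<omega>. z ^ pop0 a \<omega>) - z * Q n z\<bar> \<le> r ^ Suc n / s"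
proof -
  let ?B = "{\<omega> \<in> space M. \<not> good n \<omega>}"
  have B: "?B \<in> events" by measurable
  have pw: "\<bar>z ^ pop0 a \<omega> - z * PP n \<omega> z\<bar> \<le> indicator ?B \<omega>" if "\<omega> \<in> space M" for \<omega>
  proof (cases "good n \<omega>")
    case True then show ?thesis using good_pop[of n \<omega> z] by simp
  next
    case False
    have "0 \<le> z ^ pop0 a \<omega>" "z ^ pop0 a \<omega> \<le> 1" using z by (auto intro: power_le_one)
    moreover have "0 \<le> z * PP n \<omega> z" "z * PP n \<omega> z \<le> 1"
      using z PP_bound[OF z, of n \<omega>] by (auto intro: mult_le_one)
    ultimately show ?thesis using False that by (auto simp: indicator_def)
  qed
  have "expectation (\<lambda>\<omega>. z ^ pop0 a \<omega>) - z * Q n z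
        = expectation (\<lambda>\<omega>. z ^ pop0 a \<omega> - z * PP n \<omega> z)"
    using int_pop[OF z] int_PP[OF z, of n] by (simp add: E_PP)
  also have "\<bar>\<dots>\<bar> \<le> expectation (\<lambda>\<omega>. \<bar>z ^ pop0 a \<omega> - z * PP n \<omega> z\<bar>)"
    by (rule integral_abs_bound)
  also have "\<dots> \<le> expectation (indicator ?B)"
  proof (rule integral_mono[OF _ _ pw])
    show "integrable M (\<lambda>\<omega>. \<bar>z ^ pop0 a \<omega> - z * PP n \<omega> z\<bar>)"
      by (intro integrable_abs Bochner_Integration.integrable_diff int_pop[OF z] int_PP[OF z])
    show "integrable M (indicator ?B :: 'a \<Rightarrow> real)"
      by (intro integrable_real_indicator B) (simp add: less_top[symmetric] emeasure_finite)
  qed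
  also have "\<dots> = prob ?B" using B by simp
  also have "\<dots> \<le> r ^ Suc n / s" by (rule bad_prob)
  finally show ?thesis .
qed

lemma lim_Q:
  assumes z: "(z::real) \<in> {0..1}"
  shows "(\<lambda>n. z * Q n z) \<longlonglongrightarrow> expectation (\<lambda>\<omega>. z ^ pop0 a \<omega>)"
proof -
  have t0: "(\<lambda>n. r ^ Suc n / s) \<longlonglongrightarrow> 0"
    using r_ge r_lt by (intro tendsto_divide_zero LIMSEQ_Suc LIMSEQ_power_zero) auto
  have "(\<lambda>n. z * Q n z - expectation (\<lambda>\<omega>. z ^ pop0 a \<omega>)) \<longlonglongrightarrow> 0"
    by (rule Lim_null_comparison[OF _ t0]) (use approx[OF z] in \<open>auto simp: abs_minus_commute\<close>)
  then show ?thesis by (rule LIM_zero_cancel)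
qed

lemma Q_shift: "r * z + s = w \<Longrightarrow> w * Q n w = Q (Suc n) z"
proof (induction n)
  case 0
  then have "w = (1 - s) * z + s" using r_def by simp
  then show ?case by (simp add: Q_def) (simp add: r_def algebra_simps)
next
  case (Suc n)
  have "w * Q (Suc n) w = w * Q n w * (1 - r ^ Suc n * (1 - w))"
    by (simp add: Q_def)
  also have "\<dots> = Q (Suc n) z * (1 - r ^ Suc (Suc n) * (1 - z))"
  proof -
    have h: "1 - w = r * (1 - z)" unfolding Suc.prems[symmetric] r_def by (simp add: algebra_simps)
    show ?thesis unfolding Suc.IH[OF Suc.prems] h by (simp add: mult.assoc)
  qed
  also have "\<dots> = Q (Suc (Suc n)) z" by (simp add: Q_def)
  finally show ?case .
qed

end

theorem mainTheorem5:
  fixes M :: "'a measure" and a :: "int \<Rightarrow> 'a \<Rightarrow> nat" and s r :: real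
  assumes "prob_space M"
    and "0 < s" and "s \<le> 1" and "r = 1 - s"
    and "prob_space.indep_vars M (\<lambda>_. count_space UNIV) a UNIV"
    and "\<And>n i. measure M {\<omega> \<in> space M. a n \<omega> > i} = r ^ i"
  shows "\<forall>z\<in>{0..1}. pgf M (pop0 a) z = z * pgf M (pop0 a) (r * z + s)"
proof
  interpret popset M a s r
    by (intro popset.intro popset_axioms.intro assms)
  fix z :: real assume z: "z \<in> {0..1}"
  define w where "w = r * z + s"
  have rz: "0 \<le> r * z" "r * z \<le> r"
    using z r_ge by (auto intro: mult_nonneg_nonneg mult_left_le)
  have w: "w \<in> {0..1}" using rz r_def s_pos unfolding w_def by auto
  have l1: "(\<lambda>n. z * (w * Q n w)) \<longlonglongrightarrow> z * expectation (\<lambda>\<omega>. w ^ pop0 a \<omega>)"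
    by (intro tendsto_mult_left lim_Q[OF w])
  have l2: "(\<lambda>n. z * (w * Q n w)) \<longlonglongrightarrow> expectation (\<lambda>\<omega>. z ^ pop0 a \<omega>)"
  proof -
    have "(\<lambda>n. z * (w * Q n w)) = (\<lambda>n. z * Q (Suc n) z)"
      using Q_shift[OF w_def[symmetric]] by presburger
    then show ?thesis using LIMSEQ_Suc[OF lim_Q[OF z]] by simp
  qed
  show "pgf M (pop0 a) z = z * pgf M (pop0 a) (r * z + s)"
    unfolding pgf_def w_def[symmetric] using LIMSEQ_unique[OF l2 l1] .
qed

end
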